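(* There is a sufficiently large absolute constant $c>0$ such that for all $\mu,\mu^*\in\mathbb R^d$ with $\mu\neq0$ and $c\le\|\mu\|\le\frac43\langle\hat\mu,\mu^*\rangle$, where $\hat\mu=\mu/\|\mu\|$, the vector $$G(\mu,\mu^* )=\mathbb E_{x\sim\mathcal N(\mu^*,\mathrm{Id})}\Big[-\tfrac12\tanh''(\mu^\top x)\|\mu\|^2x+\tanh'(\mu^\top x)(\mu^\top x)\,x-\tanh'(\mu^\top x)\mu\Big]$$ satisfies $\|G(\mu,\mu^* )\|\le0.01\,\|\mu-\mu^*\|$.
   Context: In the paper this is stated for $\mu=\mu_t$ (the current parameter at noise scale $t$) and $\mu^*=\mu_t^*=e^{-t}\mu^*$, for any noise scale $t$; these are arbitrary vectors in $\mathbb R^d$. *)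

theory Defs
  imports "HOL-Probability.Probability"
begin

text \<open>Vectors in R^d are represented as functions nat => real; only coordinates i < d matter.\<close>

definition vinner :: "nat \<Rightarrow> (nat \<Rightarrow> real) \<Rightarrow> (nat \<Rightarrow> real) \<Rightarrow> real" where
  "vinner d u v = (\<Sum>i<d. u i * v i)"

definition vnorm :: "nat \<Rightarrow> (nat \<Rightarrow> real) \<Rightarrow> real" where
  "vnorm d u = sqrt (vinner d u u)"

definition gauss :: "nat \<Rightarrow> (nat \<Rightarrow> real) \<Rightarrow> (nat \<Rightarrow> real) measure" where
  "gauss d m = PiM {..<d} (\<lambda>i. density lborel (normal_density (m i) 1))"

definition Gcomp :: "nat \<Rightarrow> (nat \<Rightarrow> real) \<Rightarrow> (nat \<Rightarrow> real) \<Rightarrow> nat \<Rightarrow> real" where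
  "Gcomp d mu mus i = (\<integral>x.
      - (1/2) * deriv (deriv tanh) (vinner d mu x) * (vnorm d mu)\<^sup>2 * x i
      + deriv tanh (vinner d mu x) * vinner d mu x * x i
      - deriv tanh (vinner d mu x) * mu i
    \<partial>gauss d mus)"

end

theory Submission
  imports Defs "HOL-Real_Asymp.Real_Asymp"
begin

definition tu :: "real \<Rightarrow> real" where "tu x = 1 - (tanh x)\<^sup>2"
definition u1 :: "real \<Rightarrow> real" where "u1 x = -2 * tanh x * (1 - (tanh x)\<^sup>2)"
definition u2 :: "real \<Rightarrow> real" where "u2 x = (1 - (tanh x)\<^sup>2) * (6 * (tanh x)\<^sup>2 - 2)"
definition u3 :: "real \<Rightarrow> real" where "u3 x = (1 - (tanh x)\<^sup>2) * tanh x * (16 - 24 * (tanh x)\<^sup>2)"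

lemma cosh_nz[simp]: "cosh (x::real) \<noteq> 0" by (metis cosh_real_pos less_irrefl)

lemma D_tanh: "(tanh has_real_derivative tu x) (at x)"
  unfolding tu_def using has_field_derivative_tanh[of "\<lambda>x. x" x, OF cosh_nz DERIV_ident] by simp

lemma D_tu: "(tu has_real_derivative u1 x) (at x)"
proof -
  have "((\<lambda>x. 1 - (tanh x)\<^sup>2) has_real_derivative (0 - 2 * tanh x * ((1 - (tanh x)\<^sup>2) * 1))) (at x)"
    by (auto intro!: derivative_eq_intros)
  then show ?thesis unfolding u1_def tu_def[abs_def] by simp
qed

lemma D_u1: "(u1 has_real_derivative u2 x) (at x)"
  unfolding u1_def[abs_def] u2_def
  apply (rule DERIV_cong)
   apply (rule derivative_eq_intros refl | simp)+
  apply algebra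
  done

lemma D_u2: "(u2 has_real_derivative u3 x) (at x)"
  unfolding u2_def[abs_def] u3_def
  apply (rule DERIV_cong)
   apply (rule derivative_eq_intros refl | simp)+
  apply algebra
  done

lemma deriv_tanh: "deriv tanh = tu"
  using D_tanh DERIV_imp_deriv by blast

lemma deriv2_tanh: "deriv (deriv tanh) = u1"
  unfolding deriv_tanh using D_tu DERIV_imp_deriv by blast

lemma tanh2_lt1: "(tanh (x::real))\<^sup>2 < 1"
  using tanh_real_bounds[of x] by (simp add: abs_square_less_1 abs_if)

lemma tu_cosh: "tu x * (cosh x)\<^sup>2 = 1"
proof -
  have c: "(cosh x)\<^sup>2 = (sinh x)\<^sup>2 + 1" by (simp add: cosh_square_eq)
  show ?thesis unfolding tu_def tanh_def using cosh_nz[of x]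
    by (simp add: field_simps power2_eq_square) (simp add: c[unfolded power2_eq_square] algebra_simps)
qed

lemma tu_pos: "0 < tu x" unfolding tu_def using tanh2_lt1[of x] by simp

lemma tu_le1: "tu x \<le> 1" unfolding tu_def by simp

lemma cosh_ge: "1 + x\<^sup>2 / 4 \<le> cosh (x::real)"
proof -
  have a: "1 + \<bar>x\<bar> + \<bar>x\<bar>\<^sup>2 / 2 \<le> exp \<bar>x\<bar>" by (rule exp_lower_Taylor_quadratic) simp
  have b: "1 - \<bar>x\<bar> \<le> exp (- \<bar>x\<bar>)" using exp_ge_add_one_self[of "-\<bar>x\<bar>"] by simp
  have "cosh x = cosh \<bar>x\<bar>" by (simp add: abs_real_def)
  also have "\<dots> = (exp \<bar>x\<bar> + exp (-\<bar>x\<bar>)) / 2" by (simp add: cosh_def)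
  finally have e: "cosh x = (exp \<bar>x\<bar> + exp (-\<bar>x\<bar>)) / 2" .
  have a': "1 + \<bar>x\<bar> + x\<^sup>2 / 2 \<le> exp \<bar>x\<bar>" using a by simp
  have "1 + x\<^sup>2 / 4 \<le> (exp \<bar>x\<bar> + exp (-\<bar>x\<bar>)) / 2" using add_mono[OF a' b] by (simp add: field_simps)
  then show ?thesis using e by simp
qed

lemma cosh_ge1: "1 \<le> cosh (x::real)" using cosh_ge[of x] by (smt (verit) zero_le_power2 divide_nonneg_pos)

lemma tu_x4: "tu x * x^4 \<le> 16"
proof -
  have c: "x^4 \<le> 16 * (cosh x)\<^sup>2"
  proof -
    have "0 \<le> x\<^sup>2/4" by simp
    then have "(x\<^sup>2/4)\<^sup>2 \<le> (cosh x)\<^sup>2" using cosh_ge[of x]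
      by (intro power_mono) auto
    then show ?thesis by (simp add: power2_eq_square power4_eq_xxxx)
  qed
  have "tu x * x^4 \<le> tu x * (16 * (cosh x)\<^sup>2)" using c tu_pos[of x]
    by (intro mult_left_mono) (auto simp del: )
  also have "\<dots> = 16" using tu_cosh[of x] by simp
  finally show ?thesis .
qed

lemma tu_abs: "tu x * \<bar>x\<bar> \<le> 1"
proof -
  have c: "\<bar>x\<bar> \<le> (cosh x)\<^sup>2"
  proof -
    have s: "0 \<le> (\<bar>x\<bar>/2 - 1)\<^sup>2" by simp
    have "\<bar>x\<bar> \<le> 1 + x\<^sup>2/4" using s by (simp add: power2_eq_square field_simps)
    also have "\<dots> \<le> cosh x" by (rule cosh_ge)
    also have "\<dots> \<le> cosh x * cosh x" using cosh_ge1[of x] by (simp add: mult_le_cancel_left1)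
    finally show ?thesis by (simp add: power2_eq_square)
  qed
  have "tu x * \<bar>x\<bar> \<le> tu x * (cosh x)\<^sup>2" using c tu_pos[of x] by (intro mult_left_mono) auto
  then show ?thesis using tu_cosh[of x] by simp
qed

lemma FTC_zero:
  fixes F f :: "real \<Rightarrow> real"
  assumes D: "\<And>x. (F has_real_derivative f x) (at x)"
    and cont: "\<And>x. isCont f x"
    and int: "integrable lborel f"
    and lt: "(F \<longlongrightarrow> 0) at_top" and lb: "(F \<longlongrightarrow> 0) at_bot"
  shows "integral\<^sup>L lborel f = 0"
proof -
  have "interval_lebesgue_integral lborel (-\<infinity>) \<infinity> f = 0 - 0"
  proof (rule interval_integral_FTC_integrable)
    show "(F has_vector_derivative f x) (at x)" for x
      using D[of x] by (simp add: has_real_derivative_iff_has_vector_derivative)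
    show "isCont f x" for x by (rule cont)
    show "set_integrable lborel (einterval (- \<infinity>) \<infinity>) f"
      using int by (simp add: set_integrable_def)
    show "((F \<circ> real_of_ereal) \<longlongrightarrow> 0) (at_right (- \<infinity>))"
      using lb by (simp add: ereal_tendsto_simps)
    show "((F \<circ> real_of_ereal) \<longlongrightarrow> 0) (at_left \<infinity>)"
      using lt by (simp add: ereal_tendsto_simps)
  qed simp
  then show ?thesis
    by (simp add: interval_lebesgue_integral_def set_lebesgue_integral_def)
qed

lemma odd_zero:
  fixes f :: "real \<Rightarrow> real"
  assumes "\<And>x. f (-x) = - f x"
  shows "integral\<^sup>L lborel f = 0"
proof -
  have "integral\<^sup>L lborel f = \<bar>-1\<bar> *\<^sub>R (\<integral>x. f (0 + (-1) * x) \<partial>lborel)"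
    by (rule lborel_integral_real_affine) simp
  also have "\<dots> = (\<integral>x. - f x \<partial>lborel)" using assms by simp
  also have "\<dots> = - integral\<^sup>L lborel f" by simp
  finally show ?thesis by simp
qed

lemma normal_density_tendsto:
  assumes "0 < \<sigma>"
  shows "(normal_density c \<sigma> \<longlongrightarrow> 0) at_top" "(normal_density c \<sigma> \<longlongrightarrow> 0) at_bot"
proof -
  have e: "normal_density c \<sigma> = (\<lambda>x. 1 / sqrt (2 * pi * \<sigma>\<^sup>2) * exp (-(x - c)\<^sup>2/ (2 * \<sigma>\<^sup>2)))"
    by (simp add: normal_density_def[abs_def])
  show "(normal_density c \<sigma> \<longlongrightarrow> 0) at_top" unfolding e using assms by real_asymp
  show "(normal_density c \<sigma> \<longlongrightarrow> 0) at_bot" unfolding e using assms by real_asymp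
qed

lemma D_normal_density:
  assumes "0 < \<sigma>"
  shows "(normal_density c \<sigma> has_real_derivative (- (x - c) / \<sigma>\<^sup>2 * normal_density c \<sigma> x)) (at x)"
proof -
  have "((\<lambda>x. - (x - c)\<^sup>2 / (2 * \<sigma>\<^sup>2)) has_real_derivative (- (x - c) / \<sigma>\<^sup>2)) (at x)"
    using assms by (auto intro!: derivative_eq_intros simp: field_simps power2_eq_square)
  then have "((\<lambda>x. 1 / sqrt (2 * pi * \<sigma>\<^sup>2) * exp (- (x - c)\<^sup>2 / (2 * \<sigma>\<^sup>2))) has_real_derivative 
     1 / sqrt (2 * pi * \<sigma>\<^sup>2) * (exp (- (x - c)\<^sup>2 / (2 * \<sigma>\<^sup>2)) * (- (x - c) / \<sigma>\<^sup>2))) (at x)"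
    by (intro DERIV_cmult DERIV_chain2[OF DERIV_exp])
  then show ?thesis unfolding normal_density_def[abs_def] by (simp add: mult_ac)
qed

lemma isCont_normal_density: "0 < \<sigma> \<Longrightarrow> isCont (normal_density c \<sigma>) x"
  using D_normal_density DERIV_isCont by blast

lemma normal_density_measurable[measurable]: "normal_density c \<sigma> \<in> borel_measurable borel"
  by simp

lemma cont_borel: "(\<And>x. isCont f x) \<Longrightarrow> (f::real\<Rightarrow>real) \<in> borel_measurable borel"
  by (intro borel_measurable_continuous_onI continuous_at_imp_continuous_on) auto

lemma integrable_nd_bounded:
  fixes f :: "real \<Rightarrow> real"
  assumes "f \<in> borel_measurable borel" "\<And>x. \<bar>f x\<bar> \<le> B" and \<sigma>: "0 < \<sigma>"
  shows "integrable lborel (\<lambda>x. normal_density c \<sigma> x * f x)"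
proof (rule Bochner_Integration.integrable_bound)
  show "integrable lborel (\<lambda>x. B * normal_density c \<sigma> x)" using \<sigma> by (intro integrable_mult_right integrable_normal_density)
  show "(\<lambda>x. normal_density c \<sigma> x * f x) \<in> borel_measurable lborel" using assms(1) by simp
  show "AE x in lborel. norm (normal_density c \<sigma> x * f x) \<le> norm (B * normal_density c \<sigma> x)"
  proof (rule AE_I2)
    fix x
    have B: "0 \<le> B" using assms(2)[of x] by simp
    have "norm (normal_density c \<sigma> x * f x) = normal_density c \<sigma> x * \<bar>f x\<bar>" by (simp add: abs_mult)
    also have "\<dots> \<le> normal_density c \<sigma> x * B" using assms(2)[of x] by (intro mult_left_mono) auto
    finally show "norm (normal_density c \<sigma> x * f x) \<le> norm (B * normal_density c \<sigma> x)"
      using B by (simp add: abs_mult mult.commute)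
  qed
qed

lemma integrable_nd_lin_bounded:
  fixes f :: "real \<Rightarrow> real"
  assumes "f \<in> borel_measurable borel" "\<And>x. \<bar>f x\<bar> \<le> B" and \<sigma>: "0 < \<sigma>"
  shows "integrable lborel (\<lambda>x. normal_density c \<sigma> x * ((x - c) * f x))"
proof (rule Bochner_Integration.integrable_bound)
  show "integrable lborel (\<lambda>x. B * (normal_density c \<sigma> x * \<bar>x - c\<bar> ^ 1))"
    using integrable_normal_moment_abs[of \<sigma> c 1] \<sigma> by simp
  show "(\<lambda>x. normal_density c \<sigma> x * ((x - c) * f x)) \<in> borel_measurable lborel" using assms(1) by simp
  show "AE x in lborel. norm (normal_density c \<sigma> x * ((x - c) * f x)) \<le> norm (B * (normal_density c \<sigma> x * \<bar>x - c\<bar> ^ 1))"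
  proof (rule AE_I2)
    fix x
    have B: "0 \<le> B" using assms(2)[of x] by simp
    have "norm (normal_density c \<sigma> x * ((x - c) * f x)) = normal_density c \<sigma> x * \<bar>x - c\<bar> * \<bar>f x\<bar>" by (simp add: abs_mult)
    also have "\<dots> \<le> normal_density c \<sigma> x * \<bar>x - c\<bar> * B" using assms(2)[of x] by (intro mult_left_mono) auto
    finally show "norm (normal_density c \<sigma> x * ((x - c) * f x)) \<le> norm (B * (normal_density c \<sigma> x * \<bar>x - c\<bar> ^ 1))"
      using B by (simp add: abs_mult mult_ac)
  qed
qed

lemma stein1:
  fixes f f' :: "real \<Rightarrow> real"
  assumes \<sigma>: "0 < \<sigma>"
    and D: "\<And>x. (f has_real_derivative f' x) (at x)"
    and cont: "\<And>x. isCont f' x"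
    and bf: "\<And>x. \<bar>f x\<bar> \<le> B" and bf': "\<And>x. \<bar>f' x\<bar> \<le> B'"
  shows "(\<integral>x. normal_density c \<sigma> x * ((x - c) * f x) \<partial>lborel) = \<sigma>\<^sup>2 * (\<integral>x. normal_density c \<sigma> x * f' x \<partial>lborel)"
proof -
  let ?p = "normal_density c \<sigma>"
  have cf: "isCont f x" for x using D[of x] by (rule DERIV_isCont)
  have mf: "f \<in> borel_measurable borel" by (rule cont_borel[OF cf])
  have mf': "f' \<in> borel_measurable borel" by (rule cont_borel[OF cont])
  have i1: "integrable lborel (\<lambda>x. ?p x * f' x)" by (rule integrable_nd_bounded[OF mf' bf' \<sigma>])
  have i2: "integrable lborel (\<lambda>x. ?p x * ((x - c) * f x))" by (rule integrable_nd_lin_bounded[OF mf bf \<sigma>])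
  let ?g = "\<lambda>x. ?p x * f' x - (1 / \<sigma>\<^sup>2) * (?p x * ((x - c) * f x))"
  have "integral\<^sup>L lborel ?g = 0"
  proof (rule FTC_zero[where F = "\<lambda>x. ?p x * f x"])
    show "((\<lambda>x. ?p x * f x) has_real_derivative ?g x) (at x)" for x
      apply (rule DERIV_cong)
       apply (rule DERIV_mult[OF D_normal_density[OF \<sigma>] D])
      using \<sigma> by (simp add: field_simps)
    show "isCont ?g x" for x
      by (intro continuous_intros isCont_normal_density cont cf \<sigma>)
    show "integrable lborel ?g" using i1 i2 by simp
    have bnd0: "norm (?p x * f x) \<le> \<bar>B\<bar> * ?p x" for x
    proof -
      have "norm (?p x * f x) = \<bar>f x\<bar> * ?p x" by (simp add: abs_mult)
      also have "\<dots> \<le> \<bar>B\<bar> * ?p x" using bf[of x] by (intro mult_right_mono) auto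
      finally show ?thesis .
    qed
    have bnd: "\<forall>\<^sub>F x in F. norm (?p x * f x) \<le> \<bar>B\<bar> * ?p x" for F
      using bnd0 by (intro always_eventually allI) 
    show "((\<lambda>x. ?p x * f x) \<longlongrightarrow> 0) at_top"
      by (rule Lim_null_comparison[OF bnd]) (use tendsto_mult_right_zero[OF normal_density_tendsto(1)[OF \<sigma>]] in simp)
    show "((\<lambda>x. ?p x * f x) \<longlongrightarrow> 0) at_bot"
      by (rule Lim_null_comparison[OF bnd]) (use tendsto_mult_right_zero[OF normal_density_tendsto(2)[OF \<sigma>]] in simp)
  qed
  then have "integral\<^sup>L lborel (\<lambda>x. ?p x * f' x) - (1 / \<sigma>\<^sup>2) * integral\<^sup>L lborel (\<lambda>x. ?p x * ((x - c) * f x)) = 0"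
    using i1 i2 by simp
  then show ?thesis using \<sigma> by (simp add: field_simps)
qed

lemma gauss_bound:
  fixes f :: "real \<Rightarrow> real"
  assumes mf: "f \<in> borel_measurable borel" and b: "\<And>z. \<bar>f z\<bar> \<le> a + b * z^(2*k)"
  shows "integrable lborel (\<lambda>z. std_normal_density z * f z)"
    and "\<bar>\<integral>z. std_normal_density z * f z \<partial>lborel\<bar> \<le> a + b * (fact (2*k) / (2^k * fact k))"
proof -
  have im: "integrable lborel (\<lambda>z. std_normal_density z * z^(2*k))" by (rule integrable_std_normal_moment)
  have ig: "integrable lborel (\<lambda>z. a * std_normal_density z + b * (std_normal_density z * z^(2*k)))"
    using im by simp
  have pw: "\<bar>std_normal_density z * f z\<bar> \<le> a * std_normal_density z + b * (std_normal_density z * z^(2*k))" for z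
  proof -
    have "\<bar>std_normal_density z * f z\<bar> = std_normal_density z * \<bar>f z\<bar>" by (simp add: abs_mult)
    also have "\<dots> \<le> std_normal_density z * (a + b * z^(2*k))" by (intro mult_left_mono b) simp
    finally show ?thesis by (simp add: algebra_simps)
  qed
  show i: "integrable lborel (\<lambda>z. std_normal_density z * f z)"
  proof (rule Bochner_Integration.integrable_bound[OF ig])
    show "(\<lambda>z. std_normal_density z * f z) \<in> borel_measurable lborel" using mf by simp
    show "AE x in lborel. norm (std_normal_density x * f x) \<le> norm (a * std_normal_density x + b * (std_normal_density x * x ^ (2 * k)))"
      using pw by (intro AE_I2) (smt (verit) real_norm_def)
  qed
  have "\<bar>\<integral>z. std_normal_density z * f z \<partial>lborel\<bar> \<le> (\<integral>z. a * std_normal_density z + b * (std_normal_density z * z^(2*k)) \<partial>lborel)"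
    using Bochner_Integration.integral_norm_bound_integral[OF i ig] pw by simp
  also have "\<dots> = a + b * (fact (2*k) / (2^k * fact k))"
    using im by (simp add: integral_std_normal_moment_even)
  finally show "\<bar>\<integral>z. std_normal_density z * f z \<partial>lborel\<bar> \<le> a + b * (fact (2*k) / (2^k * fact k))" .
qed

definition phit :: "real \<Rightarrow> real \<Rightarrow> real" where
  "phit v s = -(1/2) * u1 s * v + tu s * s"
definition phid :: "real \<Rightarrow> real \<Rightarrow> real" where
  "phid v s = -(1/2) * u2 s * v + u1 s * s + tu s"
definition hh :: "real \<Rightarrow> real \<Rightarrow> real" where
  "hh v s = phit v s + phid v s - tu s"
definition hder :: "real \<Rightarrow> real \<Rightarrow> real" where
  "hder v s = -(1/2) * v * (u2 s + u3 s) + (tu s + u1 s) + s * (u1 s + u2 s)"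

lemma hh_eq: "hh v s = -(1/2) * v * (u1 s + u2 s) + s * (tu s + u1 s)"
  unfolding hh_def phit_def phid_def by (simp add: algebra_simps)

lemma D_phit: "(phit v has_real_derivative phid v s) (at s)"
  unfolding phit_def[abs_def] phid_def
  apply (rule DERIV_cong)
   apply (rule derivative_eq_intros D_tu D_u1 refl | simp)+
  done

lemma D_hh: "(hh v has_real_derivative hder v s) (at s)"
  unfolding hh_eq[abs_def] hder_def
  apply (rule DERIV_cong)
   apply (rule derivative_eq_intros D_tu D_u1 D_u2 refl | simp)+
  done

lemma cont_tanh: "isCont tanh (x::real)" using D_tanh DERIV_isCont by blast
lemma cont_tu: "isCont tu x" using D_tu DERIV_isCont by blast
lemma cont_u1: "isCont u1 x" using D_u1 DERIV_isCont by blast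
lemma cont_u2: "isCont u2 x" using D_u2 DERIV_isCont by blast
lemma cont_u3: "isCont u3 x" unfolding u3_def[abs_def]
  by (intro continuous_intros) auto

lemma meas_tu[measurable]: "tu \<in> borel_measurable borel" by (rule cont_borel[OF cont_tu])
lemma meas_u1[measurable]: "u1 \<in> borel_measurable borel" by (rule cont_borel[OF cont_u1])
lemma meas_u2[measurable]: "u2 \<in> borel_measurable borel" by (rule cont_borel[OF cont_u2])
lemma meas_u3[measurable]: "u3 \<in> borel_measurable borel" by (rule cont_borel[OF cont_u3])

lemma cont_phid: "isCont (phid v) x" unfolding phid_def[abs_def]
  by (intro continuous_intros cont_tu cont_u1 cont_u2)
lemma cont_hder: "isCont (hder v) x" unfolding hder_def[abs_def]
  by (intro continuous_intros cont_tu cont_u1 cont_u2 cont_u3)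
lemma cont_phit: "isCont (phit v) x" using D_phit DERIV_isCont by blast
lemma cont_hh: "isCont (hh v) x" using D_hh DERIV_isCont by blast

lemma meas_phit[measurable]: "phit v \<in> borel_measurable borel" by (rule cont_borel[OF cont_phit])
lemma meas_phid[measurable]: "phid v \<in> borel_measurable borel" by (rule cont_borel[OF cont_phid])
lemma meas_hh[measurable]: "hh v \<in> borel_measurable borel" by (rule cont_borel[OF cont_hh])

lemma tanh_abs_le: "\<bar>tanh (x::real)\<bar> \<le> 1"
  using tanh_real_bounds[of x] by auto

lemma tu_nn: "0 \<le> tu x" using tu_pos[of x] by simp

lemma b_u1: "\<bar>u1 x\<bar> \<le> 2 * tu x"
proof -
  have "\<bar>u1 x\<bar> = 2 * \<bar>tanh x\<bar> * tu x" unfolding u1_def tu_def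
    using tanh2_lt1[of x] by (simp add: abs_mult)
  also have "\<dots> \<le> 2 * 1 * tu x" using tanh_abs_le[of x] tu_nn[of x]
    by (intro mult_right_mono mult_left_mono) auto
  finally show ?thesis by simp
qed

lemma b_u2: "\<bar>u2 x\<bar> \<le> 4 * tu x"
proof -
  have a: "\<bar>6 * (tanh x)\<^sup>2 - 2\<bar> \<le> 4" using tanh2_lt1[of x] zero_le_power2[of "tanh x"] unfolding abs_le_iff by linarith
  have "\<bar>u2 x\<bar> = tu x * \<bar>6 * (tanh x)\<^sup>2 - 2\<bar>" unfolding u2_def tu_def
    using tanh2_lt1[of x] by (simp add: abs_mult)
  also have "\<dots> \<le> tu x * 4" using a tu_nn[of x] by (intro mult_left_mono) auto
  finally show ?thesis by simp
qed

lemma b_u3: "\<bar>u3 x\<bar> \<le> 16 * tu x"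
proof -
  have a: "\<bar>16 - 24 * (tanh x)\<^sup>2\<bar> \<le> 16" using tanh2_lt1[of x] zero_le_power2[of "tanh x"] unfolding abs_le_iff by linarith
  have b: "\<bar>tanh x\<bar> * \<bar>16 - 24 * (tanh x)\<^sup>2\<bar> \<le> 1 * 16"
    using a tanh_abs_le[of x] by (intro mult_mono) auto
  have "\<bar>u3 x\<bar> = tu x * (\<bar>tanh x\<bar> * \<bar>16 - 24 * (tanh x)\<^sup>2\<bar>)" unfolding u3_def tu_def
    using tanh2_lt1[of x] by (simp add: abs_mult)
  also have "\<dots> \<le> tu x * 16" using b tu_nn[of x] by (intro mult_left_mono) auto
  finally show ?thesis by simp
qed

lemma b_phit: assumes "0 \<le> v" shows "\<bar>phit v s\<bar> \<le> tu s * v + tu s * \<bar>s\<bar>"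
proof -
  have "\<bar>phit v s\<bar> \<le> \<bar>-(1/2) * u1 s * v\<bar> + \<bar>tu s * s\<bar>"
    unfolding phit_def by (rule abs_triangle_ineq)
  also have "\<dots> = (1/2) * \<bar>u1 s\<bar> * v + tu s * \<bar>s\<bar>"
    using assms tu_nn[of s] by (simp add: abs_mult)
  also have "\<dots> \<le> (1/2) * (2 * tu s) * v + tu s * \<bar>s\<bar>"
    using b_u1[of s] assms by (intro add_mono mult_right_mono mult_left_mono) auto
  finally show ?thesis by simp
qed

lemma b_phit_glob: assumes "0 \<le> v" shows "\<bar>phit v s\<bar> \<le> v + 1"
proof -
  have "tu s * v \<le> 1 * v" using tu_le1[of s] assms by (intro mult_right_mono) auto
  then show ?thesis using b_phit[OF assms, of s] tu_abs[of s] by simp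
qed

lemma b_phid_glob: assumes "0 \<le> v" shows "\<bar>phid v s\<bar> \<le> 2 * v + 3"
proof -
  have "\<bar>phid v s\<bar> \<le> \<bar>-(1/2) * u2 s * v\<bar> + \<bar>u1 s * s\<bar> + \<bar>tu s\<bar>"
    unfolding phid_def by (meson abs_triangle_ineq add_mono order_trans order_refl)
  also have "\<dots> = (1/2) * \<bar>u2 s\<bar> * v + \<bar>u1 s\<bar> * \<bar>s\<bar> + tu s"
    using assms tu_nn[of s] by (simp add: abs_mult)
  also have "\<dots> \<le> (1/2) * (4 * 1) * v + (2 * tu s) * \<bar>s\<bar> + 1"
    using b_u2[of s] b_u1[of s] tu_le1[of s] tu_nn[of s] assms
    by (intro add_mono mult_right_mono mult_left_mono) auto
  also have "\<dots> \<le> (1/2) * (4 * 1) * v + 2 * 1 + 1" using tu_abs[of s] by simp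
  finally show ?thesis by simp
qed

lemma b_hder: assumes "0 \<le> v" shows "\<bar>hder v s\<bar> \<le> 10 * tu s * v + 3 * tu s + 6 * tu s * \<bar>s\<bar>"
proof -
  have t3: "\<bar>a + b + c\<bar> \<le> \<bar>a\<bar> + \<bar>b\<bar> + \<bar>c\<bar>" for a b c :: real by linarith
  have "\<bar>hder v s\<bar> \<le> \<bar>-(1/2) * v * (u2 s + u3 s)\<bar> + \<bar>tu s + u1 s\<bar> + \<bar>s * (u1 s + u2 s)\<bar>"
    unfolding hder_def by (rule t3)
  also have "\<dots> \<le> (1/2) * v * (\<bar>u2 s\<bar> + \<bar>u3 s\<bar>) + (tu s + \<bar>u1 s\<bar>) + \<bar>s\<bar> * (\<bar>u1 s\<bar> + \<bar>u2 s\<bar>)"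
    using assms tu_nn[of s] 
    by (intro add_mono) (auto simp: abs_mult intro!: mult_left_mono abs_triangle_ineq)
  also have "\<dots> \<le> (1/2) * v * (4 * tu s + 16 * tu s) + (tu s + 2 * tu s) + \<bar>s\<bar> * (2 * tu s + 4 * tu s)"
    using b_u1[of s] b_u2[of s] b_u3[of s] assms
    by (intro add_mono mult_left_mono) auto
  finally show ?thesis by (simp add: algebra_simps)
qed

lemma b_hder_glob: assumes "0 \<le> v" shows "\<bar>hder v s\<bar> \<le> 10 * v + 9"
proof -
  have "10 * tu s * v \<le> 10 * 1 * v" using tu_le1[of s] assms by (intro mult_right_mono mult_left_mono) auto
  moreover have "3 * tu s \<le> 3" using tu_le1[of s] by simp
  moreover have "6 * tu s * \<bar>s\<bar> \<le> 6" using tu_abs[of s] by simp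
  ultimately show ?thesis using b_hder[OF assms, of s] by simp
qed

lemma one_minus_tanh: "1 - tanh (s::real) = exp (-s) / cosh s"
  unfolding tanh_def using cosh_minus_sinh[of s] cosh_nz[of s] by (simp add: field_simps)
lemma one_plus_tanh: "1 + tanh (s::real) = exp s / cosh s"
  unfolding tanh_def using cosh_plus_sinh[of s] cosh_nz[of s] by (simp add: field_simps)

lemma nd_sym:
  assumes \<sigma>: "0 < \<sigma>"
  shows "normal_density (\<sigma>\<^sup>2) \<sigma> (-s) * (1 + tanh s) = normal_density (\<sigma>\<^sup>2) \<sigma> s * (1 - tanh s)"
proof -
  let ?v = "\<sigma>\<^sup>2"
  let ?K = "1 / sqrt (2 * pi * \<sigma>\<^sup>2)"
  have v: "0 < ?v" using \<sigma> by simp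
  have ex: "-(s - ?v)\<^sup>2 / (2 * ?v) = -(-s - ?v)\<^sup>2 / (2 * ?v) + 2 * s"
  proof -
    have "\<sigma> \<noteq> 0" using \<sigma> by simp
    then show ?thesis by (simp add: field_simps power2_eq_square)
  qed
  have ee: "exp (-(s - ?v)\<^sup>2 / (2 * ?v)) = exp (-(-s - ?v)\<^sup>2 / (2 * ?v)) * exp (2 * s)"
    unfolding ex by (rule exp_add)
  have "normal_density ?v \<sigma> s = ?K * (exp (-(-s - ?v)\<^sup>2 / (2 * ?v)) * exp (2 * s))"
    unfolding normal_density_def ee[symmetric] by (simp add: power2_abs)
  then have "normal_density ?v \<sigma> s * (1 - tanh s) = ?K * exp (-(-s - ?v)\<^sup>2 / (2 * ?v)) * (exp (2 * s) * exp (-s) / cosh s)"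
    by (simp add: one_minus_tanh)
  also have "exp (2 * s) * exp (-s) = exp s" by (simp flip: exp_add)
  finally show ?thesis unfolding normal_density_def one_plus_tanh by simp
qed

lemma tilt:
  assumes \<sigma>: "0 < \<sigma>"
  shows "(\<integral>s. normal_density (\<sigma>\<^sup>2) \<sigma> s * hh (\<sigma>\<^sup>2) s \<partial>lborel) = 0"
proof -
  define v where "v = \<sigma>\<^sup>2"
  have v: "0 < v" using \<sigma> by (simp add: v_def)
  let ?p = "normal_density v \<sigma>"
  define Q where "Q s = -(1/2) * v * u1 s" for s
  define Q' where "Q' s = -(1/2) * v * u2 s" for s
  define R where "R s = s * (tu s + (1/2) * u1 s)" for s
  have DQ: "(Q has_real_derivative Q' s) (at s)" for s
    unfolding Q_def[abs_def] Q'_def by (intro DERIV_cmult D_u1)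
  have cQ': "isCont Q' s" for s unfolding Q'_def[abs_def] by (intro continuous_intros cont_u2)
  have bQ: "\<bar>Q s\<bar> \<le> v" for s
  proof -
    have "\<bar>Q s\<bar> = (1/2) * v * \<bar>u1 s\<bar>" using v by (simp add: Q_def abs_mult)
    also have "\<dots> \<le> (1/2) * v * (2 * 1)" using b_u1[of s] tu_le1[of s] v by (intro mult_left_mono) auto
    finally show ?thesis by simp
  qed
  have bQ': "\<bar>Q' s\<bar> \<le> 2 * v" for s
  proof -
    have "\<bar>Q' s\<bar> = (1/2) * v * \<bar>u2 s\<bar>" using v by (simp add: Q'_def abs_mult)
    also have "\<dots> \<le> (1/2) * v * (4 * 1)" using b_u2[of s] tu_le1[of s] v by (intro mult_left_mono) auto
    finally show ?thesis by simp
  qed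
  have bR: "\<bar>R s\<bar> \<le> 2" for s
  proof -
    have "\<bar>R s\<bar> \<le> \<bar>s * tu s\<bar> + \<bar>s * ((1/2) * u1 s)\<bar>" unfolding R_def distrib_left by (rule abs_triangle_ineq)
    also have "\<dots> = tu s * \<bar>s\<bar> + (1/2) * (\<bar>u1 s\<bar> * \<bar>s\<bar>)" using tu_nn[of s] by (simp add: abs_mult)
    also have "\<dots> \<le> 1 + (1/2) * ((2 * tu s) * \<bar>s\<bar>)" using tu_abs[of s] b_u1[of s]
      by (intro add_mono mult_left_mono mult_right_mono) auto
    also have "\<dots> \<le> 1 + (1/2) * 2" using tu_abs[of s] by simp
    finally show ?thesis by simp
  qed
  have mQ: "Q \<in> borel_measurable borel" unfolding Q_def[abs_def] by measurable
  have mQ': "Q' \<in> borel_measurable borel" unfolding Q'_def[abs_def] by measurable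
  have mR: "R \<in> borel_measurable borel" unfolding R_def[abs_def] by measurable
  have i1: "integrable lborel (\<lambda>s. ?p s * Q' s)" by (rule integrable_nd_bounded[OF mQ' bQ' \<sigma>])
  have i2: "integrable lborel (\<lambda>s. ?p s * ((s - v) * Q s))" by (rule integrable_nd_lin_bounded[OF mQ bQ \<sigma>])
  have i3: "integrable lborel (\<lambda>s. ?p s * R s)" by (rule integrable_nd_bounded[OF mR bR \<sigma>])
  have pw: "?p s * hh v s = ?p s * Q' s - (1/v) * (?p s * ((s - v) * Q s)) + ?p s * R s" for s
    unfolding hh_eq Q_def Q'_def R_def using v by (simp add: field_simps)
  have st: "(\<integral>s. ?p s * ((s - v) * Q s) \<partial>lborel) = \<sigma>\<^sup>2 * (\<integral>s. ?p s * Q' s \<partial>lborel)"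
    by (rule stein1[OF \<sigma> DQ cQ' bQ bQ'])
  have odd: "(\<integral>s. ?p s * R s \<partial>lborel) = 0"
  proof (rule odd_zero)
    fix s
    have t1: "tu (-s) = tu s" by (simp add: tu_def)
    have t2: "u1 (-s) = - u1 s" by (simp add: u1_def)
    have "?p (-s) * R (-s) = - (s * tu s * (?p (-s) * (1 + tanh s)))"
      unfolding R_def t1 t2 by (simp add: u1_def tu_def algebra_simps)
    also have "\<dots> = - (s * tu s * (?p s * (1 - tanh s)))"
      using nd_sym[OF \<sigma>, of s] by (simp add: v_def)
    also have "\<dots> = - (?p s * R s)"
      unfolding R_def by (simp add: u1_def tu_def algebra_simps)
    finally show "?p (-s) * R (-s) = - (?p s * R s)" .
  qed
  have "(\<integral>s. ?p s * hh v s \<partial>lborel) = (\<integral>s. ?p s * Q' s - (1/v) * (?p s * ((s - v) * Q s)) + ?p s * R s \<partial>lborel)"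
    using pw by simp
  also have "\<dots> = (\<integral>s. ?p s * Q' s \<partial>lborel) - (1/v) * (\<integral>s. ?p s * ((s - v) * Q s) \<partial>lborel) + (\<integral>s. ?p s * R s \<partial>lborel)"
    using i1 i2 i3 by simp
  also have "\<dots> = 0" using st odd v by (simp add: v_def)
  finally show ?thesis by (simp add: v_def)
qed

lemma fact4: "fact (2*2) / (2^2 * fact 2) = (3::real)" by (simp add: fact_numeral)
lemma fact8: "fact (2*4) / (2^4 * fact 4) = (105::real)" by (simp add: fact_numeral)

lemma tu_decay: assumes "0 < s" shows "tu s \<le> 16 / s^4"
  using tu_x4[of s] assms by (simp add: field_simps)

lemma inv3: assumes "0 < (v::real)" "v / 2 \<le> s" shows "1 / s^3 \<le> 8 / v^3"
proof -
  have "(v/2)^3 \<le> s^3" using assms by (intro power_mono) auto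
  then have "v^3 \<le> 8 * s^3" by (simp add: power_divide)
  moreover have "0 < s" using assms by simp
  ultimately show ?thesis using assms by (simp add: field_simps)
qed

lemma good_phit: assumes "2 \<le> v" "v / 2 \<le> s" shows "\<bar>phit v s\<bar> \<le> 384 / v^3"
proof -
  have s: "0 < s" "1 \<le> s" using assms by auto
  have "\<bar>phit v s\<bar> \<le> tu s * v + tu s * \<bar>s\<bar>" using b_phit[of v s] assms by simp
  also have "\<dots> \<le> tu s * (2 * s) + tu s * s" using assms s tu_nn[of s]
    by (intro add_mono mult_left_mono) auto
  also have "\<dots> = 3 * (tu s * s^4) / s^3" using s by (simp add: field_simps power_eq_if)
  also have "\<dots> \<le> 3 * 16 / s^3" using tu_x4[of s] s by (intro divide_right_mono) auto
  also have "\<dots> = 48 * (1 / s^3)" by simp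
  also have "\<dots> \<le> 48 * (8 / v^3)" using inv3[of v s] assms by (intro mult_left_mono) auto
  finally show ?thesis by simp
qed

lemma good_hder: assumes "2 \<le> v" "v / 2 \<le> s" shows "\<bar>hder v s\<bar> \<le> 3712 / v^3"
proof -
  have s: "0 < s" "1 \<le> s" using assms by auto
  have "\<bar>hder v s\<bar> \<le> 10 * tu s * v + 3 * tu s + 6 * tu s * \<bar>s\<bar>" using b_hder[of v s] assms by simp
  also have "\<dots> \<le> 10 * tu s * (2 * s) + 3 * tu s * s + 6 * tu s * s"
  proof -
    have "3 * tu s \<le> 3 * tu s * s" using s tu_nn[of s] by (simp add: mult_le_cancel_left1)
    moreover have "10 * tu s * v \<le> 10 * tu s * (2 * s)" using assms tu_nn[of s] by (intro mult_left_mono) auto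
    moreover have "6 * tu s * \<bar>s\<bar> = 6 * tu s * s" using s by simp
    ultimately show ?thesis by linarith
  qed
  also have "\<dots> = 29 * (tu s * s^4) / s^3" using s by (simp add: field_simps power_eq_if)
  also have "\<dots> \<le> 29 * 16 / s^3" using tu_x4[of s] s by (intro divide_right_mono) auto
  also have "\<dots> = 464 * (1 / s^3)" by simp
  also have "\<dots> \<le> 464 * (8 / v^3)" using inv3[of v s] assms by (intro mult_left_mono) auto
  finally show ?thesis by simp
qed

lemma bad_z: assumes "0 < (\<sigma>::real)" "z < -\<sigma>/4" "even n" shows "1 \<le> 4^n * z^n / \<sigma>^n"
proof -
  have "(\<sigma>/4)^n \<le> (-z)^n" using assms by (intro power_mono) auto
  also have "(-z)^n = z^n" using \<open>even n\<close> by simp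
  finally have "\<sigma>^n \<le> 4^n * z^n" by (simp add: power_divide field_simps)
  then show ?thesis using assms by (simp add: field_simps)
qed

lemma good_z: assumes "0 < (\<sigma>::real)" "v = \<sigma>\<^sup>2" "3/4 * v \<le> m" "-\<sigma>/4 \<le> z" shows "v / 2 \<le> m + \<sigma> * z"
proof -
  have "\<sigma> * (-\<sigma>/4) \<le> \<sigma> * z" using assms by (intro mult_left_mono) auto
  then show ?thesis using assms by (simp add: power2_eq_square)
qed

lemma pwA:
  assumes \<sigma>: "0 < \<sigma>" and v: "v = \<sigma>\<^sup>2" "2 \<le> v" and m: "3/4 * v \<le> m"
  shows "\<bar>phit v (m + \<sigma> * z)\<bar> \<le> 384 / v^3 + ((v + 1) * 256 / v^2) * z^(2*2)"
proof (cases "-\<sigma>/4 \<le> z")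
  case True
  have "\<bar>phit v (m + \<sigma> * z)\<bar> \<le> 384 / v^3" using good_phit[OF v(2) good_z[OF \<sigma> v(1) m True]] .
  moreover have "0 \<le> ((v + 1) * 256 / v^2) * z^(2*2)" using v by simp
  ultimately show ?thesis by linarith
next
  case False
  have b: "1 \<le> 4^4 * z^4 / \<sigma>^4" using bad_z[OF \<sigma>, of z 4] False by simp
  have s4: "\<sigma>^4 = v^2" using v by (simp add: power_mult[symmetric])
  have "\<bar>phit v (m + \<sigma> * z)\<bar> \<le> (v + 1) * 1" using b_phit_glob[of v] v by simp
  also have "\<dots> \<le> (v + 1) * (4^4 * z^4 / \<sigma>^4)" using b v by (intro mult_left_mono) auto
  also have "\<dots> = ((v + 1) * 256 / v^2) * z^(2*2)" using s4 by simp
  finally show ?thesis using v by (simp add: add_increasing)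
qed

lemma boundA:
  assumes \<sigma>: "0 < \<sigma>" and v: "v = \<sigma>\<^sup>2" "2 \<le> v" and m: "3/4 * v \<le> m"
  shows "\<bar>\<integral>z. std_normal_density z * phit v (m + \<sigma> * z) \<partial>lborel\<bar> \<le> 384 / v^3 + ((v + 1) * 256 / v^2) * 3"
  using gauss_bound(2)[of "\<lambda>z. phit v (m + \<sigma> * z)" "384 / v^3" "(v + 1) * 256 / v^2" 2, OF _ pwA[OF assms]]
  unfolding fact4 by measurable

lemma pwB:
  assumes \<sigma>: "0 < \<sigma>" and v: "v = \<sigma>\<^sup>2" "2 \<le> v" and m: "3/4 * v \<le> m"
  shows "\<bar>hh v (m + \<sigma> * z) - hh v (v + \<sigma> * z)\<bar> \<le> \<bar>m - v\<bar> / v * (3712 / v^2)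
          + (\<bar>m - v\<bar> / v * (v * (10 * v + 9) * 65536 / v^4)) * z^(2*4)"
proof (cases "-\<sigma>/4 \<le> z")
  case True
  have x: "m + \<sigma> * z \<in> {v/2..}" using good_z[OF \<sigma> v(1) m True] by simp
  have y: "v + \<sigma> * z \<in> {v/2..}" using good_z[OF \<sigma> v(1) _ True] v by simp
  have "norm (hh v (m + \<sigma> * z) - hh v (v + \<sigma> * z)) \<le> 3712 / v^3 * norm ((m + \<sigma> * z) - (v + \<sigma> * z))"
  proof (rule field_differentiable_bound[OF _ _ _ x y])
    show "convex {v/2..}" by (rule convex_real_interval)
    show "(hh v has_field_derivative hder v \<xi>) (at \<xi> within {v/2..})" for \<xi>
      using D_hh has_field_derivative_at_within by blast
    show "norm (hder v \<xi>) \<le> 3712 / v^3" if "\<xi> \<in> {v/2..}" for \<xi>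
      using good_hder[OF v(2), of \<xi>] that by simp
  qed
  then have "\<bar>hh v (m + \<sigma> * z) - hh v (v + \<sigma> * z)\<bar> \<le> 3712 / v^3 * \<bar>m - v\<bar>" by simp
  also have "\<dots> = \<bar>m - v\<bar> / v * (3712 / v^2)" using v by (simp add: power_eq_if field_simps)
  finally show ?thesis using v by (simp add: add_increasing2)
next
  case False
  have b: "1 \<le> 4^8 * z^8 / \<sigma>^8" using bad_z[OF \<sigma>, of z 8] False by simp
  have s8: "\<sigma>^8 = v^4" using v by (simp add: power_mult[symmetric])
  have "norm (hh v (m + \<sigma> * z) - hh v (v + \<sigma> * z)) \<le> (10 * v + 9) * norm ((m + \<sigma> * z) - (v + \<sigma> * z))"
  proof (rule field_differentiable_bound[of UNIV])
    show "(hh v has_field_derivative hder v \<xi>) (at \<xi> within UNIV)" for \<xi>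
      using D_hh by simp
    show "norm (hder v \<xi>) \<le> 10 * v + 9" for \<xi>
      using b_hder_glob[of v \<xi>] v by simp
  qed auto
  moreover have "(\<bar>m - v\<bar> / v * (v * (10 * v + 9))) * 1 = (10 * v + 9) * \<bar>m - v\<bar>"
    using v(2) by (simp add: field_simps)
  ultimately have "\<bar>hh v (m + \<sigma> * z) - hh v (v + \<sigma> * z)\<bar> \<le> (\<bar>m - v\<bar> / v * (v * (10 * v + 9))) * 1"
    by simp
  also have "\<dots> \<le> (\<bar>m - v\<bar> / v * (v * (10 * v + 9))) * (4^8 * z^8 / \<sigma>^8)"
    using b v by (intro mult_left_mono) auto
  also have "\<dots> = (\<bar>m - v\<bar> / v * (v * (10 * v + 9) * 65536 / v^4)) * z^(2*4)"
    using s8 by simp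
  finally show ?thesis using v by (simp add: add_increasing)
qed

lemma boundB:
  assumes \<sigma>: "0 < \<sigma>" and v: "v = \<sigma>\<^sup>2" "2 \<le> v" and m: "3/4 * v \<le> m"
  shows "\<bar>\<integral>z. std_normal_density z * (hh v (m + \<sigma> * z) - hh v (v + \<sigma> * z)) \<partial>lborel\<bar>
     \<le> \<bar>m - v\<bar> / v * (3712 / v^2) + (\<bar>m - v\<bar> / v * (v * (10 * v + 9) * 65536 / v^4)) * 105"
  using gauss_bound(2)[of "\<lambda>z. hh v (m + \<sigma> * z) - hh v (v + \<sigma> * z)" _ _ 4, OF _ pwB[OF assms]]
  unfolding fact8 by measurable

abbreviation Mn :: "(nat \<Rightarrow> real) \<Rightarrow> nat \<Rightarrow> real measure" where
  "Mn mus i \<equiv> density lborel (normal_density (mus i) 1)"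

lemma gauss_eq: "gauss d mus = PiM {..<d} (Mn mus)" by (simp add: gauss_def)

lemma prob_Mn: "prob_space (Mn mus i)" by (rule prob_space_normal_density) simp

lemma prob_gauss: "prob_space (gauss d mus)"
  unfolding gauss_eq by (rule prob_space_PiM) (rule prob_Mn)

lemma coord_distr: "i < d \<Longrightarrow> distr (gauss d mus) (Mn mus i) (\<lambda>x. x i) = Mn mus i"
  unfolding gauss_eq by (rule distr_PiM_component) (auto intro: prob_Mn)

lemma meas_coord: "i < d \<Longrightarrow> (\<lambda>x. x i) \<in> measurable (gauss d mus) (Mn mus i)"
  unfolding gauss_eq by (rule measurable_component_singleton) simp

lemma meas_coord_borel[measurable]: "i < d \<Longrightarrow> (\<lambda>x. x i) \<in> borel_measurable (gauss d mus)"
  using meas_coord[of i d mus] by (simp add: measurable_def)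

lemma coord_distr_borel: "i < d \<Longrightarrow> distr (gauss d mus) borel (\<lambda>x. x i) = Mn mus i"
proof -
  assume i: "i < d"
  have "distr (gauss d mus) borel (\<lambda>x. x i) = distr (gauss d mus) (Mn mus i) (\<lambda>x. x i)"
    by (rule distr_cong) auto
  then show ?thesis using coord_distr[OF i] by simp
qed

lemma coord_distributed: "i < d \<Longrightarrow> distributed (gauss d mus) lborel (\<lambda>x. x i) (normal_density (mus i) 1)"
  unfolding distributed_def
proof (intro conjI)
  assume i: "i < d"
  have "distr (gauss d mus) lborel (\<lambda>x. x i) = distr (gauss d mus) (Mn mus i) (\<lambda>x. x i)"
    by (rule distr_cong) auto
  then show "distr (gauss d mus) lborel (\<lambda>x. x i) = density lborel (normal_density (mus i) 1)"
    using coord_distr[OF i] by simp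
  show "(\<lambda>x. ennreal (normal_density (mus i) 1 x)) \<in> borel_measurable lborel" by simp
  show "(\<lambda>x. x i) \<in> measurable (gauss d mus) lborel"
    using meas_coord_borel[OF i] by (simp add: measurable_def)
qed

lemma coords_indep:
  assumes "0 < d"
  shows "prob_space.indep_vars (gauss d mus) (\<lambda>_. borel) (\<lambda>i x. x i) {..<d}"
proof -
  interpret P: prob_space "gauss d mus" by (rule prob_gauss)
  let ?I = "{..<d}"
  have ne: "?I \<noteq> {}" using assms by auto
  have rv: "\<And>i. i \<in> ?I \<Longrightarrow> P.random_variable borel (\<lambda>x. x i)"
  proof -
    fix i assume "i \<in> ?I"
    then have "i < d" by simp
    from meas_coord_borel[OF this, of mus] show "P.random_variable borel (\<lambda>x. x i)" .
  qed
  have "distr (gauss d mus) (PiM ?I (\<lambda>i. borel)) (\<lambda>x. \<lambda>i\<in>?I. x i) = distr (gauss d mus) (PiM ?I (\<lambda>i. borel)) (\<lambda>x. x)"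
    by (rule distr_cong) (auto simp: gauss_eq space_PiM PiE_restrict)
  also have "\<dots> = gauss d mus"
    unfolding gauss_eq by (rule distr_id2) (rule sets_PiM_cong, simp_all)
  also have "\<dots> = PiM ?I (\<lambda>i. distr (gauss d mus) borel (\<lambda>x. x i))"
    unfolding gauss_eq by (rule PiM_cong) (auto simp: coord_distr_borel[unfolded gauss_eq])
  finally have eq: "distr (gauss d mus) (PiM ?I (\<lambda>i. borel)) (\<lambda>x. \<lambda>i\<in>?I. x i) = PiM ?I (\<lambda>i. distr (gauss d mus) borel (\<lambda>x. x i))" .
  have iff: "P.indep_vars (\<lambda>_. borel) (\<lambda>i x. x i) ?I \<longleftrightarrow>
     distr (gauss d mus) (PiM ?I (\<lambda>i. borel)) (\<lambda>x. \<lambda>i\<in>?I. x i) = PiM ?I (\<lambda>i. distr (gauss d mus) borel (\<lambda>x. x i))"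
    by (rule P.indep_vars_iff_distr_eq_PiM'[OF ne]) (rule rv)
  show ?thesis using iff eq by blast
qed

lemma meas_vinner[measurable]: "(\<lambda>x. vinner d mu x) \<in> borel_measurable (gauss d mus)"
  unfolding vinner_def
  by (rule borel_measurable_sum) (auto intro!: borel_measurable_times meas_coord_borel)

lemma vnorm_sq: "(vnorm d mu)\<^sup>2 = vinner d mu mu"
  unfolding vnorm_def vinner_def by (simp add: sum_nonneg)

lemma s_distributed:
  assumes r: "0 < vnorm d mu"
  shows "distributed (gauss d mus) lborel (\<lambda>x. (vinner d mu x - vinner d mu mus) / vnorm d mu) std_normal_density"
proof -
  interpret P: prob_space "gauss d mus" by (rule prob_gauss)
  define J where "J = {i. i < d \<and> mu i \<noteq> 0}"
  have fJ: "finite J" unfolding J_def by simp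
  have JI: "J \<subseteq> {..<d}" unfolding J_def by auto
  have Jsum: "sum g J = (\<Sum>i<d. g i)" if "\<And>i. mu i = 0 \<Longrightarrow> g i = 0" for g :: "nat \<Rightarrow> real"
    by (rule sum.mono_neutral_left) (auto simp: J_def that)
  have rr: "vnorm d mu = sqrt (\<Sum>i<d. mu i * mu i)" by (simp add: vnorm_def vinner_def)
  have Jne: "J \<noteq> {}"
  proof
    assume "J = {}"
    then have "(\<Sum>i<d. mu i * mu i) = 0" using Jsum[of "\<lambda>i. mu i * mu i"] by simp
    then show False using r rr by simp
  qed
  then have d: "0 < d" unfolding J_def by auto
  have ind: "P.indep_vars (\<lambda>_. borel) (\<lambda>i x. mu i * x i) J"
  proof (rule P.indep_vars_subset[OF _ JI])
    show "P.indep_vars (\<lambda>_. borel) (\<lambda>i x. mu i * x i) {..<d}"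
      using P.indep_vars_compose2[OF coords_indep[OF d, of mus], of "\<lambda>i y. mu i * y" "\<lambda>_. borel"]
      by simp
  qed
  have nd: "distributed (gauss d mus) lborel (\<lambda>x. mu i * x i) (normal_density (mu i * mus i) \<bar>mu i\<bar>)" if "i \<in> J" for i
  proof -
    have "i < d" "mu i \<noteq> 0" using that by (auto simp: J_def)
    from P.normal_density_affine[OF coord_distributed[OF this(1)] _ this(2), of 0]
    show ?thesis by simp
  qed
  have "distributed (gauss d mus) lborel (\<lambda>x. \<Sum>i\<in>J. mu i * x i)
        (normal_density (\<Sum>i\<in>J. mu i * mus i) (sqrt (\<Sum>i\<in>J. (\<bar>mu i\<bar>)\<^sup>2)))"
    by (rule P.sum_indep_normal[OF fJ Jne ind]) (auto simp: J_def intro: nd)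
  moreover have "(\<lambda>x. \<Sum>i\<in>J. mu i * x i) = (\<lambda>x. vinner d mu x)"
    unfolding vinner_def by (rule ext, rule Jsum) simp
  moreover have "(\<Sum>i\<in>J. mu i * mus i) = vinner d mu mus"
    unfolding vinner_def by (rule Jsum) simp
  moreover have "sqrt (\<Sum>i\<in>J. (\<bar>mu i\<bar>)\<^sup>2) = vnorm d mu"
    unfolding rr by (subst Jsum[symmetric]) (auto simp: power2_eq_square)
  ultimately have "distributed (gauss d mus) lborel (\<lambda>x. vinner d mu x) (normal_density (vinner d mu mus) (vnorm d mu))"
    by simp
  then show ?thesis using P.normal_standard_normal_convert[OF r] by simp
qed

lemma gtransfer:
  assumes r: "0 < vnorm d mu" and f: "f \<in> borel_measurable borel"
  shows "(\<integral>x. f (vinner d mu x) \<partial>gauss d mus) =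
         (\<integral>z. std_normal_density z * f (vinner d mu mus + vnorm d mu * z) \<partial>lborel)"
proof -
  have "(\<integral>z. std_normal_density z * f (vinner d mu mus + vnorm d mu * z) \<partial>lborel) =
        (\<integral>x. f (vinner d mu mus + vnorm d mu * ((vinner d mu x - vinner d mu mus) / vnorm d mu)) \<partial>gauss d mus)"
    by (rule distributed_integral[OF s_distributed[OF r]]) (use f in auto)
  also have "\<dots> = (\<integral>x. f (vinner d mu x) \<partial>gauss d mus)" using r by simp
  finally show ?thesis by simp
qed

lemma prod_sf: "product_sigma_finite (Mn mus)"
  unfolding product_sigma_finite_def using prob_space_imp_sigma_finite[OF prob_Mn] by blast

lemma bounded_integrable_gauss:
  fixes F :: "(nat \<Rightarrow> real) \<Rightarrow> real"
  assumes "F \<in> borel_measurable (gauss d mus)" "\<And>x. \<bar>F x\<bar> \<le> B"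
  shows "integrable (gauss d mus) F"
proof -
  interpret P: prob_space "gauss d mus" by (rule prob_gauss)
  show ?thesis by (rule P.integrable_const_bound[of _ B]) (use assms in auto)
qed

lemma integrable_coord:
  assumes i: "i < d"
  shows "integrable (gauss d mus) (\<lambda>x. x i - mus i)"
proof -
  have "integrable lborel (\<lambda>y. normal_density (mus i) 1 y * (y - mus i) ^ 1)"
    by (rule integrable_normal_moment) simp
  then have "integrable (Mn mus i) (\<lambda>y. y - mus i)"
    by (subst integrable_density) auto
  then have "integrable (distr (gauss d mus) (Mn mus i) (\<lambda>x. x i)) (\<lambda>y. y - mus i)"
    using coord_distr[OF i] by simp
  then show ?thesis
    by (subst (asm) integrable_distr_eq) (auto intro: meas_coord[OF i] meas_coord_borel[OF i])
qed

lemma vinner_upd: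
  assumes i: "i < d"
  shows "vinner d mu (x(i := y)) = mu i * y + vinner d mu (x(i := 0))"
proof -
  have "vinner d mu (x(i := y)) = mu i * (x(i:=y)) i + (\<Sum>j\<in>{..<d} - {i}. mu j * (x(i:=y)) j)"
    unfolding vinner_def using i by (subst sum.remove[of _ i]) auto
  also have "(\<Sum>j\<in>{..<d} - {i}. mu j * (x(i:=y)) j) = (\<Sum>j\<in>{..<d} - {i}. mu j * (x(i:=0)) j)"
    by (rule sum.cong) auto
  also have "\<dots> = vinner d mu (x(i := 0))"
    unfolding vinner_def using i by (subst (2) sum.remove[of _ i]) auto
  finally show ?thesis by (simp add: fun_upd_def)
qed

lemma int_Mn:
  "f \<in> borel_measurable borel \<Longrightarrow> (\<integral>y. f y \<partial>Mn mus i) = (\<integral>y. normal_density (mus i) 1 y * f y \<partial>lborel)"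
  by (subst integral_density) auto

lemma stein_d:
  fixes g g' :: "real \<Rightarrow> real"
  assumes i: "i < d"
    and D: "\<And>s. (g has_real_derivative g' s) (at s)"
    and cont: "\<And>s. isCont g' s"
    and bg: "\<And>s. \<bar>g s\<bar> \<le> B" and bg': "\<And>s. \<bar>g' s\<bar> \<le> B'"
  shows "(\<integral>x. (x i - mus i) * g (vinner d mu x) \<partial>gauss d mus) = mu i * (\<integral>x. g' (vinner d mu x) \<partial>gauss d mus)"
proof -
  interpret PS: product_sigma_finite "Mn mus" by (rule prod_sf)
  have mg[measurable]: "g \<in> borel_measurable borel"
    using D by (intro cont_borel) (rule DERIV_isCont)
  have mg'[measurable]: "g' \<in> borel_measurable borel" by (rule cont_borel[OF cont])
  define I' where "I' = {..<d} - {i}"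
  have II: "insert i I' = {..<d}" using i by (auto simp: I'_def)
  have fI: "finite I'" "i \<notin> I'" by (auto simp: I'_def)
  have P: "gauss d mus = PiM (insert i I') (Mn mus)" by (simp add: II gauss_eq)
  have intF: "integrable (gauss d mus) (\<lambda>x. (x i - mus i) * g (vinner d mu x))"
  proof (rule Bochner_Integration.integrable_bound)
    show "integrable (gauss d mus) (\<lambda>x. \<bar>B\<bar> * (x i - mus i))"
      using integrable_coord[OF i] by simp
    show "(\<lambda>x. (x i - mus i) * g (vinner d mu x)) \<in> borel_measurable (gauss d mus)"
      using meas_coord_borel[OF i] by measurable
    show "AE x in gauss d mus. norm ((x i - mus i) * g (vinner d mu x)) \<le> norm (\<bar>B\<bar> * (x i - mus i))"
    proof (intro AE_I2)
      fix x
      have "\<bar>x i - mus i\<bar> * \<bar>g (vinner d mu x)\<bar> \<le> \<bar>x i - mus i\<bar> * \<bar>B\<bar>"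
        by (intro mult_left_mono order_trans[OF bg abs_ge_self]) simp
      then show "norm ((x i - mus i) * g (vinner d mu x)) \<le> norm (\<bar>B\<bar> * (x i - mus i))"
        by (simp add: abs_mult mult.commute)
    qed
  qed
  have intG: "integrable (gauss d mus) (\<lambda>x. g' (vinner d mu x))"
    by (rule bounded_integrable_gauss[OF _ bg']) measurable
  have inner: "(\<integral>y. ((x(i:=y)) i - mus i) * g (vinner d mu (x(i:=y))) \<partial>Mn mus i) =
               mu i * (\<integral>y. g' (vinner d mu (x(i:=y))) \<partial>Mn mus i)" for x
  proof -
    define b where "b = vinner d mu (x(i := 0))"
    have vb: "vinner d mu (x(i:=y)) = mu i * y + b" for y
      using vinner_upd[OF i, of mu x y] unfolding b_def .
    have f1: "(\<lambda>y. ((x(i:=y)) i - mus i) * g (vinner d mu (x(i:=y)))) = (\<lambda>y. (y - mus i) * g (mu i * y + b))"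
      by (rule ext) (simp only: vb fun_upd_same)
    have f2: "(\<lambda>y. g' (vinner d mu (x(i:=y)))) = (\<lambda>y. g' (mu i * y + b))"
      by (rule ext) (simp only: vb fun_upd_same)
    have e1: "(\<integral>y. (y - mus i) * g (mu i * y + b) \<partial>Mn mus i) =
              (\<integral>y. normal_density (mus i) 1 y * ((y - mus i) * g (mu i * y + b)) \<partial>lborel)"
      by (rule int_Mn) measurable
    have e2: "(\<integral>y. g' (mu i * y + b) \<partial>Mn mus i) =
              (\<integral>y. normal_density (mus i) 1 y * g' (mu i * y + b) \<partial>lborel)"
      by (rule int_Mn) measurable
    have st: "(\<integral>y. normal_density (mus i) 1 y * ((y - mus i) * g (mu i * y + b)) \<partial>lborel) =
              1\<^sup>2 * (\<integral>y. normal_density (mus i) 1 y * (mu i * g' (mu i * y + b)) \<partial>lborel)"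
    proof (rule stein1[where B = B and B' = "\<bar>mu i\<bar> * B'"])
      show "((\<lambda>y. g (mu i * y + b)) has_real_derivative mu i * g' (mu i * y + b)) (at y)" for y
      proof -
        have "((\<lambda>y. mu i * y + b) has_real_derivative mu i * 1 + 0) (at y)"
          by (intro DERIV_add DERIV_cmult DERIV_ident DERIV_const)
        from DERIV_chain2[OF D this] show ?thesis by (simp add: mult.commute)
      qed
      show "isCont (\<lambda>y. mu i * g' (mu i * y + b)) y" for y
      proof -
        have "isCont (\<lambda>y. mu i * y + b) y" by (intro continuous_intros)
        then have "isCont (\<lambda>y. g' (mu i * y + b)) y" by (rule isCont_o2[OF _ cont])
        then show ?thesis by (intro continuous_intros)
      qed
      show "\<bar>g (mu i * y + b)\<bar> \<le> B" for y by (rule bg)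
      show "\<bar>mu i * g' (mu i * y + b)\<bar> \<le> \<bar>mu i\<bar> * B'" for y
        unfolding abs_mult by (intro mult_left_mono bg') simp
    qed simp
    have e3: "(\<integral>y. normal_density (mus i) 1 y * (mu i * g' (mu i * y + b)) \<partial>lborel) =
              mu i * (\<integral>y. normal_density (mus i) 1 y * g' (mu i * y + b) \<partial>lborel)"
      by (simp add: mult.left_commute) 
    show ?thesis unfolding f1 f2 e1 e2 using st e3 by simp
  qed
  have intF': "integrable (PiM (insert i I') (Mn mus)) (\<lambda>x. (x i - mus i) * g (vinner d mu x))"
    using intF unfolding P .
  have intG': "integrable (PiM (insert i I') (Mn mus)) (\<lambda>x. g' (vinner d mu x))"
    using intG unfolding P .
  have "(\<integral>x. (x i - mus i) * g (vinner d mu x) \<partial>gauss d mus) =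
        (\<integral>x. (\<integral>y. ((x(i:=y)) i - mus i) * g (vinner d mu (x(i:=y))) \<partial>Mn mus i) \<partial>PiM I' (Mn mus))"
    unfolding P by (rule PS.product_integral_insert[OF fI intF'])
  also have "\<dots> = (\<integral>x. mu i * (\<integral>y. g' (vinner d mu (x(i:=y))) \<partial>Mn mus i) \<partial>PiM I' (Mn mus))"
    by (simp only: inner)
  also have "\<dots> = mu i * (\<integral>x. (\<integral>y. g' (vinner d mu (x(i:=y))) \<partial>Mn mus i) \<partial>PiM I' (Mn mus))"
    by (rule integral_mult_right_zero)
  also have "(\<integral>x. (\<integral>y. g' (vinner d mu (x(i:=y))) \<partial>Mn mus i) \<partial>PiM I' (Mn mus)) = (\<integral>x. g' (vinner d mu x) \<partial>gauss d mus)"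
    unfolding P by (rule PS.product_integral_insert[OF fI intG', symmetric])
  finally show ?thesis .
qed

lemma integrable_lin_gauss:
  fixes g :: "real \<Rightarrow> real"
  assumes i: "i < d" and mg: "g \<in> borel_measurable borel" and bg: "\<And>s. \<bar>g s\<bar> \<le> B"
  shows "integrable (gauss d mus) (\<lambda>x. (x i - mus i) * g (vinner d mu x))"
proof (rule Bochner_Integration.integrable_bound)
  show "integrable (gauss d mus) (\<lambda>x. \<bar>B\<bar> * (x i - mus i))"
    using integrable_coord[OF i] by simp
  show "(\<lambda>x. (x i - mus i) * g (vinner d mu x)) \<in> borel_measurable (gauss d mus)"
    using meas_coord_borel[OF i] mg by measurable
  show "AE x in gauss d mus. norm ((x i - mus i) * g (vinner d mu x)) \<le> norm (\<bar>B\<bar> * (x i - mus i))"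
  proof (intro AE_I2)
    fix x
    have "\<bar>x i - mus i\<bar> * \<bar>g (vinner d mu x)\<bar> \<le> \<bar>x i - mus i\<bar> * \<bar>B\<bar>"
      by (intro mult_left_mono order_trans[OF bg abs_ge_self]) simp
    then show "norm ((x i - mus i) * g (vinner d mu x)) \<le> norm (\<bar>B\<bar> * (x i - mus i))"
      by (simp add: abs_mult mult.commute)
  qed
qed

lemma b_hh_glob: assumes "0 \<le> v" shows "\<bar>hh v s\<bar> \<le> 3 * v + 5"
proof -
  have "\<bar>hh v s\<bar> \<le> \<bar>phit v s\<bar> + \<bar>phid v s\<bar> + \<bar>tu s\<bar>" unfolding hh_def by linarith
  then show ?thesis using b_phit_glob[OF assms, of s] b_phid_glob[OF assms, of s] tu_le1[of s] tu_nn[of s] by simp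
qed

lemma Gcomp_formula:
  fixes d :: nat and mu mus :: "nat \<Rightarrow> real"
  assumes i: "i < d"
  defines "v \<equiv> (vnorm d mu)\<^sup>2"
  shows "Gcomp d mu mus i = (\<integral>x. phit v (vinner d mu x) \<partial>gauss d mus) * (mus i - mu i)
                          + (\<integral>x. hh v (vinner d mu x) \<partial>gauss d mus) * mu i"
proof -
  let ?P = "gauss d mus"
  let ?s = "\<lambda>x. vinner d mu x"
  have v: "0 \<le> v" unfolding v_def by simp
  have pw: "- (1/2) * deriv (deriv tanh) (?s x) * (vnorm d mu)\<^sup>2 * x i
      + deriv tanh (?s x) * ?s x * x i - deriv tanh (?s x) * mu i
      = (x i - mus i) * phit v (?s x) + mus i * phit v (?s x) - mu i * tu (?s x)" for x
    unfolding deriv2_tanh unfolding deriv_tanh phit_def v_def by (simp add: field_simps)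
  have i1: "integrable ?P (\<lambda>x. (x i - mus i) * phit v (?s x))"
    by (rule integrable_lin_gauss[OF i meas_phit b_phit_glob[OF v]])
  have i2: "integrable ?P (\<lambda>x. phit v (?s x))"
    by (rule bounded_integrable_gauss[OF _ b_phit_glob[OF v]]) measurable
  have i3: "integrable ?P (\<lambda>x. tu (?s x))"
    by (rule bounded_integrable_gauss[of _ _ _ 1]) (auto simp: tu_le1 tu_nn)
  have i4: "integrable ?P (\<lambda>x. phid v (?s x))"
    by (rule bounded_integrable_gauss[OF _ b_phid_glob[OF v]]) measurable
  have st: "(\<integral>x. (x i - mus i) * phit v (?s x) \<partial>?P) = mu i * (\<integral>x. phid v (?s x) \<partial>?P)"
    by (rule stein_d[OF i D_phit cont_phid b_phit_glob[OF v] b_phid_glob[OF v]])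
  have "Gcomp d mu mus i = (\<integral>x. (x i - mus i) * phit v (?s x) + mus i * phit v (?s x) - mu i * tu (?s x) \<partial>?P)"
    unfolding Gcomp_def using pw by simp
  also have "\<dots> = (\<integral>x. (x i - mus i) * phit v (?s x) \<partial>?P) + mus i * (\<integral>x. phit v (?s x) \<partial>?P) - mu i * (\<integral>x. tu (?s x) \<partial>?P)"
    using i1 i2 i3 by simp
  finally have G2: "Gcomp d mu mus i = mu i * (\<integral>x. phid v (?s x) \<partial>?P) + mus i * (\<integral>x. phit v (?s x) \<partial>?P) - mu i * (\<integral>x. tu (?s x) \<partial>?P)"
    unfolding st .
  have H: "(\<integral>x. hh v (?s x) \<partial>?P) = (\<integral>x. phit v (?s x) \<partial>?P) + (\<integral>x. phid v (?s x) \<partial>?P) - (\<integral>x. tu (?s x) \<partial>?P)"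
    unfolding hh_def using i2 i3 i4 by simp
  show ?thesis unfolding G2 H by (simp add: algebra_simps)
qed

lemma nd_affine: assumes r: "0 < r" shows "normal_density c r (c + r * z) = std_normal_density z / r"
proof -
  have s: "sqrt (2 * pi * r\<^sup>2) = sqrt (2 * pi) * r" using r by (simp add: real_sqrt_mult)
  have e: "- (c + r * z - c)\<^sup>2 / (2 * r\<^sup>2) = - z\<^sup>2 / 2" using r by (simp add: power_mult_distrib)
  show ?thesis unfolding normal_density_def s e using r by simp
qed

lemma tilt_z:
  assumes r: "0 < r"
  shows "(\<integral>z. std_normal_density z * hh (r\<^sup>2) (r\<^sup>2 + r * z) \<partial>lborel) = 0"
proof -
  have "0 = (\<integral>s. normal_density (r\<^sup>2) r s * hh (r\<^sup>2) s \<partial>lborel)" using tilt[OF r] by simp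
  also have "\<dots> = \<bar>r\<bar> *\<^sub>R (\<integral>z. normal_density (r\<^sup>2) r (r\<^sup>2 + r * z) * hh (r\<^sup>2) (r\<^sup>2 + r * z) \<partial>lborel)"
    using r by (intro lborel_integral_real_affine) simp
  also have "\<dots> = r * (\<integral>z. (1 / r) * (std_normal_density z * hh (r\<^sup>2) (r\<^sup>2 + r * z)) \<partial>lborel)"
    using r by (simp add: nd_affine)
  also have "\<dots> = (\<integral>z. std_normal_density z * hh (r\<^sup>2) (r\<^sup>2 + r * z) \<partial>lborel)"
    using r by simp
  finally show ?thesis by simp
qed

lemma numeric:
  fixes v :: real
  assumes v: "10^12 \<le> v"
  shows "(384 / v^3 + ((v + 1) * 256 / v^2) * 3) + (3712 / v^2 + (v * (10 * v + 9) * 65536 / v^4) * 105) \<le> 1/100"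
proof -
  have v1: "1 \<le> v" using v by simp
  have vp: "0 < v" using v1 by simp
  have a: "384 / v^3 \<le> 384 / v" using v1 by (intro divide_left_mono) (auto simp: power_increasing[of 1 3 v, simplified])
  have b: "((v + 1) * 256 / v^2) * 3 \<le> 1536 / v"
  proof -
    have "((v + 1) * 256 / v^2) * 3 = 768 * (v + 1) / v^2" by simp
    also have "\<dots> \<le> 768 * (2 * v) / v^2" using v1 by (intro divide_right_mono) auto
    also have "\<dots> = 1536 / v" using vp by (simp add: power2_eq_square)
    finally show ?thesis .
  qed
  have c: "3712 / v^2 \<le> 3712 / v" using v1 by (intro divide_left_mono) (auto simp: power2_eq_square)
  have d: "(v * (10 * v + 9) * 65536 / v^4) * 105 \<le> 130744320 / v"
  proof -
    have "(v * (10 * v + 9) * 65536 / v^4) * 105 = 6881280 * (v * (10 * v + 9)) / v^4" by simp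
    also have "\<dots> \<le> 6881280 * (v * (19 * v)) / v^4" using v1 by (intro divide_right_mono mult_left_mono) auto
    also have "\<dots> = 130744320 / v^2" using vp by (simp add: power_eq_if)
    also have "\<dots> \<le> 130744320 / v" using v1 by (intro divide_left_mono) (auto simp: power2_eq_square)
    finally show ?thesis .
  qed
  have "130749952 / v \<le> 130749952 / 10^12" using v by (intro divide_left_mono) auto
  also have "\<dots> \<le> 1/100" by simp
  finally have f: "130749952 / v \<le> 1/100" .
  have e: "384/v + 1536/v + 3712/v + 130744320/v = 130749952/v" by (simp add: add_divide_distrib[symmetric])
  show ?thesis using a b c d e f by linarith
qed

lemma L2_scale: "L2_set (\<lambda>i. c * f i) I = \<bar>c\<bar> * L2_set f I"
  unfolding L2_set_def by (simp add: power_mult_distrib real_sqrt_mult sum_distrib_left[symmetric])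

theorem lemmaC9:
  shows "\<exists>c::real. c > 0 \<and>
    (\<forall>(d::nat) (mu::nat \<Rightarrow> real) (mus::nat \<Rightarrow> real).
       vnorm d mu \<noteq> 0 \<longrightarrow>
       c \<le> vnorm d mu \<longrightarrow>
       vnorm d mu \<le> 4/3 * vinner d (\<lambda>i. mu i / vnorm d mu) mus \<longrightarrow>
       sqrt (\<Sum>i<d. (Gcomp d mu mus i)\<^sup>2) \<le> 0.01 * vnorm d (\<lambda>i. mu i - mus i))"
proof (intro exI[of _ "10^6"] conjI allI impI)
  show "(0::real) < 10^6" by simp
  fix d :: nat and mu mus :: "nat \<Rightarrow> real"
  assume nz: "vnorm d mu \<noteq> 0" and cr: "10^6 \<le> vnorm d mu"
    and hyp: "vnorm d mu \<le> 4/3 * vinner d (\<lambda>i. mu i / vnorm d mu) mus"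
  define r where "r = vnorm d mu"
  define v where "v = r\<^sup>2"
  define m where "m = vinner d mu mus"
  define D where "D = vnorm d (\<lambda>i. mu i - mus i)"
  let ?P = "gauss d mus"
  have r: "0 < r" using cr by (simp add: r_def)
  have v12: "10^12 \<le> v"
  proof -
    have "(10^6)\<^sup>2 \<le> r\<^sup>2" using cr by (intro power_mono) (auto simp: r_def)
    then show ?thesis by (simp add: v_def)
  qed
  have v2: "2 \<le> v" using v12 by simp
  have vpos: "0 < v" using v2 by simp
  have hm: "3/4 * v \<le> m"
  proof -
    have "vinner d (\<lambda>i. mu i / vnorm d mu) mus = m / r"
      unfolding vinner_def m_def r_def by (simp add: sum_divide_distrib)
    then have "r \<le> 4/3 * (m / r)" using hyp by (simp add: r_def)
    then have "r * r \<le> r * (4/3 * (m / r))" using r by (intro mult_left_mono) auto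
    then show ?thesis using r by (simp add: v_def power2_eq_square field_simps)
  qed
  have vr: "v = r\<^sup>2" by (simp add: v_def)
  define A where "A = (\<integral>x. phit v (vinner d mu x) \<partial>?P)"
  define Gm where "Gm = (\<integral>x. hh v (vinner d mu x) \<partial>?P)"
  define a0 where "a0 = 384 / v^3 + ((v + 1) * 256 / v^2) * 3"
  define eta where "eta = 3712 / v^2 + (v * (10 * v + 9) * 65536 / v^4) * 105"
  have A_eq: "A = (\<integral>z. std_normal_density z * phit v (m + r * z) \<partial>lborel)"
    unfolding A_def m_def r_def by (rule gtransfer) (use r in \<open>auto simp: r_def\<close>)
  have A_bd: "\<bar>A\<bar> \<le> a0" unfolding A_eq a0_def by (rule boundA[OF r vr v2 hm])
  have G_eq: "Gm = (\<integral>z. std_normal_density z * hh v (m + r * z) \<partial>lborel)"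
    unfolding Gm_def m_def r_def by (rule gtransfer) (use r in \<open>auto simp: r_def\<close>)
  have hb: "\<bar>hh v s\<bar> \<le> (3 * v + 5) + 0 * s^(2*0)" for s using b_hh_glob[of v s] vpos by simp
  have int1: "integrable lborel (\<lambda>z. std_normal_density z * hh v (m + r * z))"
    by (rule gauss_bound(1)[of _ "3 * v + 5" 0 0]) (use b_hh_glob[of v] vpos in auto)
  have int2: "integrable lborel (\<lambda>z. std_normal_density z * hh v (v + r * z))"
    by (rule gauss_bound(1)[of _ "3 * v + 5" 0 0]) (use b_hh_glob[of v] vpos in auto)
  have zero: "(\<integral>z. std_normal_density z * hh v (v + r * z) \<partial>lborel) = 0"
    using tilt_z[OF r] by (simp add: vr)
  have "Gm = (\<integral>z. std_normal_density z * hh v (m + r * z) \<partial>lborel) - (\<integral>z. std_normal_density z * hh v (v + r * z) \<partial>lborel)"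
    using G_eq zero by simp
  also have "\<dots> = (\<integral>z. std_normal_density z * (hh v (m + r * z) - hh v (v + r * z)) \<partial>lborel)"
    using int1 int2 by (simp add: right_diff_distrib)
  finally have G_eq2: "Gm = \<dots>" .
  have G_bd: "\<bar>Gm\<bar> \<le> \<bar>m - v\<bar> / v * eta"
  proof -
    have eqn: "\<bar>m - v\<bar> / v * (3712 / v^2) + (\<bar>m - v\<bar> / v * (v * (10 * v + 9) * 65536 / v^4)) * 105 = \<bar>m - v\<bar> / v * eta"
      unfolding eta_def by (simp only: distrib_left mult.assoc)
    show ?thesis unfolding G_eq2 using boundB[OF r vr v2 hm] eqn by linarith
  qed
  have Gc: "Gcomp d mu mus i = A * (mus i - mu i) + Gm * mu i" if "i < d" for i
    unfolding A_def Gm_def v_def r_def by (rule Gcomp_formula[OF that])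
  have rL: "r = L2_set mu {..<d}"
    unfolding r_def vnorm_def vinner_def L2_set_def by (simp add: power2_eq_square)
  have DL: "D = L2_set (\<lambda>i. mus i - mu i) {..<d}"
    unfolding D_def vnorm_def vinner_def L2_set_def by (simp add: power2_eq_square algebra_simps)
  have CS: "\<bar>m - v\<bar> \<le> r * D"
  proof -
    have "m - v = (\<Sum>i<d. mu i * (mus i - mu i))"
      unfolding m_def vr r_def vnorm_sq vinner_def by (simp add: sum_subtractf right_diff_distrib)
    then have "\<bar>m - v\<bar> \<le> (\<Sum>i<d. \<bar>mu i\<bar> * \<bar>mus i - mu i\<bar>)"
      by (simp add: abs_mult[symmetric] sum_abs)
    also have "\<dots> \<le> L2_set mu {..<d} * L2_set (\<lambda>i. mus i - mu i) {..<d}" by (rule L2_set_mult_ineq)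
    finally show ?thesis by (simp add: rL DL)
  qed
  have "sqrt (\<Sum>i<d. (Gcomp d mu mus i)\<^sup>2) = L2_set (\<lambda>i. A * (mus i - mu i) + Gm * mu i) {..<d}"
    unfolding L2_set_def by (simp add: Gc)
  also have "\<dots> \<le> L2_set (\<lambda>i. A * (mus i - mu i)) {..<d} + L2_set (\<lambda>i. Gm * mu i) {..<d}"
    by (rule L2_set_triangle_ineq)
  also have "\<dots> = \<bar>A\<bar> * D + \<bar>Gm\<bar> * r" by (simp add: L2_scale rL DL)
  also have "\<dots> \<le> a0 * D + eta * D"
  proof (rule add_mono)
    have D0: "0 \<le> D" by (simp add: D_def vnorm_def vinner_def sum_nonneg)
    show "\<bar>A\<bar> * D \<le> a0 * D" using A_bd D0 by (rule mult_right_mono)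
    have eta0: "0 \<le> eta" unfolding eta_def using vpos by simp
    have "\<bar>Gm\<bar> * r \<le> (\<bar>m - v\<bar> / v * eta) * r" using G_bd r by (intro mult_right_mono) auto
    also have "\<dots> \<le> (r * D / v * eta) * r" using CS vpos eta0 r
      by (intro mult_right_mono divide_right_mono) auto
    also have "\<dots> = eta * D" using r vpos by (simp add: vr power2_eq_square field_simps)
    finally show "\<bar>Gm\<bar> * r \<le> eta * D" .
  qed
  also have "\<dots> = (a0 + eta) * D" by (simp add: algebra_simps)
  also have "\<dots> \<le> (1/100) * D"
    using numeric[OF v12] by (intro mult_right_mono) (auto simp: a0_def eta_def D_def vnorm_def vinner_def sum_nonneg)
  finally show "sqrt (\<Sum>i<d. (Gcomp d mu mus i)\<^sup>2) \<le> 0.01 * vnorm d (\<lambda>i. mu i - mus i)"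
    by (simp add: D_def)
qed

end
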